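(* Assume Assumption 1 and Assumption 2 with $\delta>1/10$. For any distinct $u,u_1,u_2\in L$, as $n_L,n_R\to\infty$, $$\Pr[(u_1,u_2)\in E\mid S_L,S_R,\ (u,u_1)\in E,\ (u,u_2)\in E]=\frac{1}{1+\frac{M_{R2}^2}{M_{R3}M_{R1}}w_u}+o(1).$$
   Context: Model: left nodes $L$ ($|L|=n_L$), right nodes $R$ ($|R|=n_R$), weight sequences $S_L=(w_u)_{u\in L}$, $S_R=(w_v)_{v\in R}$ of positive reals; $M_{Lk}=\frac1{n_L}\sum_{u\in L}w_u^k$, $M_{Rk}=\frac1{n_R}\sum_{v\in R}w_v^k$. The random bipartite graph $G_b=(L\sqcup R,E_b)$ contains each edge $(u,v)$, $u\in L$, $v\in R$, independently with probability $\min\left(\frac{w_uw_v}{n_RM_{R1}},1\right)$. The projected graph is $G=(L,E)$ with $(u,u')\in E$ for distinct $u,u'\in L$ iff there is $z\in R$ with $(u,z),(u',z)\in E_b$. Assumption 1: $\frac{w_uw_v}{n_RM_{R1}}\le1$ for all $u\in L,v\in R$. Assumption 2 (parameter $\delta>0$), as $n_L,n_R\to\infty$: $\max(S_L\cup S_R)=O(n_R^{1/2-\delta})$, $\min S_L=\Omega(1)$, $M_{R2}=O(M_{R1}^2)$, $M_{R4}=O(n_R^{1-2\delta})$. *)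

theory Defs
  imports "HOL-Probability.Probability" "HOL-Library.Landau_Symbols"
begin

text \<open>Left nodes are 0..<nL, right nodes are 0..<nR; weights are functions nat => real.\<close>

definition moment :: "nat \<Rightarrow> (nat \<Rightarrow> real) \<Rightarrow> nat \<Rightarrow> real" where
  "moment n w k = (\<Sum>i<n. w i ^ k) / real n"

definition edge_prob :: "nat \<Rightarrow> (nat \<Rightarrow> real) \<Rightarrow> (nat \<Rightarrow> real) \<Rightarrow> nat \<Rightarrow> nat \<Rightarrow> real" where
  "edge_prob nR wL wR u v = min (wL u * wR v / (real nR * moment nR wR 1)) 1"

definition bip_graph :: "nat \<Rightarrow> nat \<Rightarrow> (nat \<Rightarrow> real) \<Rightarrow> (nat \<Rightarrow> real) \<Rightarrow> (nat \<times> nat \<Rightarrow> bool) pmf" where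
  "bip_graph nL nR wL wR =
     Pi_pmf ({..<nL} \<times> {..<nR}) False (\<lambda>(u,v). bernoulli_pmf (edge_prob nR wL wR u v))"

definition proj_edge :: "nat \<Rightarrow> (nat \<times> nat \<Rightarrow> bool) \<Rightarrow> nat \<Rightarrow> nat \<Rightarrow> bool" where
  "proj_edge nR Gb u u' \<longleftrightarrow> u \<noteq> u' \<and> (\<exists>z<nR. Gb (u,z) \<and> Gb (u',z))"

definition cprob :: "'a pmf \<Rightarrow> ('a \<Rightarrow> bool) \<Rightarrow> ('a \<Rightarrow> bool) \<Rightarrow> real" where
  "cprob D A B = measure_pmf.prob D {x. A x \<and> B x} / measure_pmf.prob D {x. B x}"

end

theory Submission
  imports Defs
begin

lemma ratio_arith:
  fixes PA PB S D e :: real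
  assumes D: "D > 0" and S: "0 \<le> S" "S \<le> D" and e: "0 \<le> e" "e \<le> 1/6"
    and PB: "PB \<le> D" "D * (1 - 3*e) \<le> PB" and PA: "S * (1 - e) \<le> PA" "PA \<le> S + e * D"
  shows "\<bar>PA / PB - S / D\<bar> \<le> 8 * e"
proof -
  have h: "1 - 3*e \<ge> 1/2" using e by simp
  have "D * (1 - 3*e) > 0" using D h by simp
  hence PBpos: "PB > 0" using PB by linarith
  have "0 \<le> S * (1 - e)" using S e by simp
  hence PAnn: "0 \<le> PA" using PA by linarith
  have up1: "PA / PB \<le> (S + e*D) / (D * (1 - 3*e))"
    by (rule frac_le) (use PA PB PBpos \<open>D * (1 - 3*e) > 0\<close> S e D in auto)
  have "(S + e*D) / (D * (1 - 3*e)) - S / D = (e*D + 3*e*S) / (D * (1 - 3*e))"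
    using D h by (simp add: field_simps)
  also have "\<dots> \<le> (4*e*D) / (D * (1/2))"
  proof (rule frac_le)
    show "0 \<le> 4*e*D" using e D by simp
    have "e * S \<le> e * D" using e S by (simp add: mult_left_mono)
    then show "e*D + 3*e*S \<le> 4*e*D" by linarith
    show "0 < D * (1/2)" using D by simp
    show "D * (1/2) \<le> D * (1 - 3*e)" using D h by simp
  qed
  also have "\<dots> = 8 * e" using D by (simp add: field_simps)
  finally have up: "PA / PB - S / D \<le> 8 * e" using up1 by linarith
  have "PA / D \<le> PA / PB"
    by (rule divide_left_mono) (use PAnn PB PBpos D in auto)
  moreover have "S * (1 - e) / D \<le> PA / D" using PA D by (simp add: divide_right_mono)
  moreover have "S * (1 - e) / D = S / D - e * (S / D)" using D by (simp add: field_simps)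
  moreover have "e * (S / D) \<le> e" using S D e by (intro mult_left_le) auto
  ultimately have lo: "S / D - PA / PB \<le> 8 * e" using e by linarith
  show ?thesis using up lo by linarith
qed
lemma lower_arith:
  fixes P S Sq Sr e :: real
  assumes P: "S + Sq*Sr - e*S - (2*S*Sq + Sq^2*Sr)/2 - (2*S*Sr + Sr^2*Sq)/2 \<le> P"
    and nn: "0 \<le> S" "0 \<le> Sq" "0 \<le> Sr" "Sq \<le> e" "Sr \<le> e"
  shows "(S + Sq*Sr)*(1-3*e) \<le> P"
proof -
  have e: "0 \<le> e" using nn by linarith
  have h1: "S*Sq \<le> S*e" "S*Sr \<le> S*e" using nn by (simp_all add: mult_left_mono)
  have h2: "Sq*(Sq*Sr) \<le> e*(Sq*Sr)" "Sr*(Sq*Sr) \<le> e*(Sq*Sr)"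
    using nn by (simp_all add: mult_right_mono)
  have h3: "0 \<le> e*(Sq*Sr)" using nn e by simp
  have eq1: "2*S*Sq + Sq^2*Sr = 2*(S*Sq) + Sq*(Sq*Sr)" by (simp add: power2_eq_square mult_ac)
  have eq2: "2*S*Sr + Sr^2*Sq = 2*(S*Sr) + Sr*(Sq*Sr)" by (simp add: power2_eq_square mult_ac)
  have eq3: "(S + Sq*Sr)*(1-3*e) = S + Sq*Sr - 3*(S*e) - 3*(e*(Sq*Sr))" by (simp add: algebra_simps)
  have eq4: "e*S = S*e" by simp
  show ?thesis using P h1 h2 h3 unfolding eq1 eq2 eq3 eq4 by argo
qed




definition PP :: "nat \<Rightarrow> nat \<Rightarrow> nat \<Rightarrow> (nat \<times> nat \<Rightarrow> bool) \<Rightarrow> real" where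
  "PP x y z G = of_bool (G (x,z) \<and> G (y,z))"
definition TT3 :: "nat \<Rightarrow> nat \<Rightarrow> nat \<Rightarrow> nat \<Rightarrow> (nat \<times> nat \<Rightarrow> bool) \<Rightarrow> real" where
  "TT3 x y w z G = of_bool (G (x,z) \<and> G (y,z) \<and> G (w,z))"
definition SP :: "nat \<Rightarrow> nat \<Rightarrow> nat \<Rightarrow> (nat \<times> nat \<Rightarrow> bool) \<Rightarrow> real" where
  "SP x y n G = (\<Sum>z<n. PP x y z G)"
definition ST :: "nat \<Rightarrow> nat \<Rightarrow> nat \<Rightarrow> nat \<Rightarrow> (nat \<times> nat \<Rightarrow> bool) \<Rightarrow> real" where
  "ST x y w n G = (\<Sum>z<n. TT3 x y w z G)"
definition S2 :: "(nat \<times> nat \<Rightarrow> real) \<Rightarrow> nat \<Rightarrow> nat \<Rightarrow> nat \<Rightarrow> real" where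
  "S2 \<pi> x y n = (\<Sum>z<n. \<pi>(x,z) * \<pi>(y,z))"
definition S3 :: "(nat \<times> nat \<Rightarrow> real) \<Rightarrow> nat \<Rightarrow> nat \<Rightarrow> nat \<Rightarrow> nat \<Rightarrow> real" where
  "S3 \<pi> x y w n = (\<Sum>z<n. \<pi>(x,z) * \<pi>(y,z) * \<pi>(w,z))"

definition EvA' :: "nat \<Rightarrow> nat \<Rightarrow> nat \<Rightarrow> (nat \<times> nat \<Rightarrow> bool) \<Rightarrow> bool" where
  "EvA' y w n G \<longleftrightarrow> (\<exists>z<n. G (y,z) \<and> G (w,z))"
definition EvB' :: "nat \<Rightarrow> nat \<Rightarrow> nat \<Rightarrow> nat \<Rightarrow> (nat \<times> nat \<Rightarrow> bool) \<Rightarrow> bool" where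
  "EvB' x y w n G \<longleftrightarrow> (\<exists>z<n. G (x,z) \<and> G (y,z)) \<and> (\<exists>z<n. G (x,z) \<and> G (w,z))"

lemma nat_lower2:
  fixes q r :: nat
  shows "real q * real r - (real q ^ 2 - real q) * real r / 2 - real q * (real r ^ 2 - real r) / 2
          \<le> of_bool (1 \<le> q \<and> 1 \<le> r)"
proof (cases "q = 0 \<or> r = 0")
  case True then show ?thesis by auto
next
  case False
  have eq: "real q * real r - (real q ^ 2 - real q) * real r / 2 - real q * (real r ^ 2 - real r) / 2
      = real q * real r * (4 - real q - real r) / 2" by (simp add: field_simps power2_eq_square)
  show ?thesis
  proof (cases "q + r \<ge> 4")
    case True
    hence "4 - real q - real r \<le> 0" by linarith
    hence "real q * real r * (4 - real q - real r) \<le> 0"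
      by (simp add: mult_nonneg_nonpos)
    then show ?thesis using eq by simp
  next
    case F2: False
    then have "(q = 1 \<and> r = 1) \<or> (q = 1 \<and> r = 2) \<or> (q = 2 \<and> r = 1)" using False by auto
    then show ?thesis by (auto simp: power2_eq_square)
  qed
qed

lemma nat_lower1:
  fixes t :: nat
  shows "real t - (real t ^ 2 - real t) / 2 \<le> of_bool (1 \<le> t)"
proof (cases "t \<le> 2")
  case True then have "t = 0 \<or> t = 1 \<or> t = 2" by auto
  then show ?thesis by (auto simp: power2_eq_square)
next
  case False
  hence "real t \<ge> 3" by simp
  have h: "3 * real t \<le> real t * real t" using \<open>real t \<ge> 3\<close> by (simp add: mult_right_mono)
  have "real t - (real t ^ 2 - real t) / 2 \<le> 0" using h unfolding power2_eq_square by (simp add: field_simps)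
  moreover have "(1::real) = of_bool (1 \<le> t)" using \<open>real t \<ge> 3\<close> by simp
  ultimately show ?thesis by linarith
qed

context
  fixes I :: "(nat \<times> nat) set" and \<pi> :: "nat \<times> nat \<Rightarrow> real"
  assumes finI: "finite I" and \<pi>01: "\<And>x. x \<in> I \<Longrightarrow> 0 \<le> \<pi> x \<and> \<pi> x \<le> 1"
begin

abbreviation "DD \<equiv> Pi_pmf I False (\<lambda>x. bernoulli_pmf (\<pi> x))"

lemma fin_support: "finite (set_pmf DD)"
  using finI by (simp add: set_Pi_pmf finite_PiE_dflt)

lemma integrable_DD[simp]: "integrable (measure_pmf DD) (f :: _ \<Rightarrow> real)"
  by (rule integrable_measure_pmf_finite[OF fin_support])

lemma E_rect:
  assumes "K \<subseteq> I"
  shows "measure_pmf.expectation DD (\<lambda>G. of_bool (\<forall>x\<in>K. G x)) = (\<Prod>x\<in>K. \<pi> x)"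
proof -
  define B where "B = (\<lambda>x. if x \<in> K then {True} else (UNIV :: bool set))"
  have "(\<lambda>G. of_bool (\<forall>x\<in>K. G x) :: real) = indicator (Pi I B)"
    using assms by (auto simp: fun_eq_iff B_def indicator_def Pi_def)
  hence "measure_pmf.expectation DD (\<lambda>G. of_bool (\<forall>x\<in>K. G x)) = measure_pmf.prob DD (Pi I B)"
    by simp
  also have "\<dots> = (\<Prod>x\<in>I. measure_pmf.prob (bernoulli_pmf (\<pi> x)) (B x))"
    by (rule measure_Pi_pmf_Pi[OF finI])
  also have "\<dots> = (\<Prod>x\<in>I. if x \<in> K then \<pi> x else 1)"
    by (intro prod.cong refl) (auto simp: B_def measure_pmf_single \<pi>01)
  also have "\<dots> = (\<Prod>x\<in>K. \<pi> x)"
    using assms finI by (simp add: prod.If_cases Int_absorb1)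
  finally show ?thesis .
qed


lemma E_via:
  assumes "f = (\<lambda>G. of_bool (\<forall>x\<in>K. G x))" "K \<subseteq> I"
  shows "measure_pmf.expectation DD f = prod \<pi> K"
  unfolding assms(1) by (rule E_rect[OF assms(2)])


context
  fixes a b c n :: nat
  assumes inI: "\<And>z. z < n \<Longrightarrow> (a,z) \<in> I \<and> (b,z) \<in> I \<and> (c,z) \<in> I"
    and ab: "a \<noteq> b" and ac: "a \<noteq> c" and bc: "b \<noteq> c"
begin

abbreviation "XX \<equiv> PP a b"
abbreviation "YY \<equiv> PP a c"
abbreviation "ZZ \<equiv> PP b c"
abbreviation "TT \<equiv> TT3 a b c"

lemma nn1: "x < n \<Longrightarrow> 0 \<le> \<pi>(a,x) \<and> 0 \<le> \<pi>(b,x) \<and> 0 \<le> \<pi>(c,x) \<and> \<pi>(a,x) \<le> 1 \<and> \<pi>(b,x) \<le> 1 \<and> \<pi>(c,x) \<le> 1"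
  using \<pi>01 inI by blast

lemma E_XY:
  assumes "z < n" "z' < n"
  shows "measure_pmf.expectation DD (\<lambda>G. XX z G * YY z' G) =
     (if z = z' then \<pi>(a,z) * \<pi>(b,z) * \<pi>(c,z) else \<pi>(a,z) * \<pi>(b,z) * \<pi>(a,z') * \<pi>(c,z'))"
proof (cases "z = z'")
  case True
  have "measure_pmf.expectation DD (\<lambda>G. XX z G * YY z' G) = prod \<pi> {(a,z),(b,z),(c,z)}"
      by (rule E_via) (use inI assms True in \<open>auto simp: fun_eq_iff PP_def\<close>)
    also have "\<dots> = \<pi>(a,z) * \<pi>(b,z) * \<pi>(c,z)" using ab ac bc assms True by (simp add: mult.assoc)
    finally show ?thesis using True by simp
next
  case False
  have "measure_pmf.expectation DD (\<lambda>G. XX z G * YY z' G) = prod \<pi> {(a,z),(b,z),(a,z'),(c,z')}"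
      by (rule E_via) (use inI assms False in \<open>auto simp: fun_eq_iff PP_def\<close>)
    also have "\<dots> = \<pi>(a,z) * \<pi>(b,z) * \<pi>(a,z') * \<pi>(c,z')" using ab ac bc assms False by (simp add: mult.assoc)
    finally show ?thesis using False by simp
qed

lemma E_XXY:
  assumes "z < n" "z' < n" "z'' < n" "z \<noteq> z'"
  shows "measure_pmf.expectation DD (\<lambda>G. XX z G * XX z' G * YY z'' G) \<le>
     (if z'' = z then \<pi>(a,z) * \<pi>(b,z) * \<pi>(c,z) * (\<pi>(a,z') * \<pi>(b,z')) else 0) +
     (if z'' = z' then \<pi>(a,z) * \<pi>(b,z) * (\<pi>(a,z') * \<pi>(b,z') * \<pi>(c,z')) else 0) +
     \<pi>(a,z) * \<pi>(b,z) * (\<pi>(a,z') * \<pi>(b,z')) * (\<pi>(a,z'') * \<pi>(c,z''))"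
proof -
  note nn = nn1[OF assms(1)] nn1[OF assms(2)] nn1[OF assms(3)]
  consider (c1) "z'' = z" | (c2) "z'' = z'" | (c3) "z'' \<noteq> z" "z'' \<noteq> z'" by blast
  then show ?thesis
  proof cases
    case c1
    have "measure_pmf.expectation DD (\<lambda>G. XX z G * XX z' G * YY z'' G) = prod \<pi> {(a,z),(b,z),(c,z),(a,z'),(b,z')}"
      by (rule E_via) (use inI assms c1 in \<open>auto simp: fun_eq_iff PP_def\<close>)
    also have "\<dots> = \<pi>(a,z) * \<pi>(b,z) * \<pi>(c,z) * (\<pi>(a,z') * \<pi>(b,z'))" using ab ac bc assms c1 by (simp add: mult.assoc)
    finally show ?thesis using c1 nn assms by (simp add: mult_nonneg_nonneg)
  next
    case c2
    have "measure_pmf.expectation DD (\<lambda>G. XX z G * XX z' G * YY z'' G) = prod \<pi> {(a,z),(b,z),(a,z'),(b,z'),(c,z')}"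
      by (rule E_via) (use inI assms c2 in \<open>auto simp: fun_eq_iff PP_def\<close>)
    also have "\<dots> = \<pi>(a,z) * \<pi>(b,z) * (\<pi>(a,z') * \<pi>(b,z') * \<pi>(c,z'))" using ab ac bc assms c2 by (simp add: mult.assoc)
    finally show ?thesis using c2 nn assms by (simp add: mult_nonneg_nonneg)
  next
    case c3
    have "measure_pmf.expectation DD (\<lambda>G. XX z G * XX z' G * YY z'' G) = prod \<pi> {(a,z),(b,z),(a,z'),(b,z'),(a,z''),(c,z'')}"
      by (rule E_via) (use inI assms c3 in \<open>auto simp: fun_eq_iff PP_def\<close>)
    also have "\<dots> = \<pi>(a,z) * \<pi>(b,z) * (\<pi>(a,z') * \<pi>(b,z')) * (\<pi>(a,z'') * \<pi>(c,z''))" using ab ac bc assms c3 by (simp add: mult.assoc)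
    finally show ?thesis using c3 nn assms by (simp add: mult_nonneg_nonneg)
  qed
qed

lemma E_TT:
  assumes "z < n" "z' < n" "z \<noteq> z'"
  shows "measure_pmf.expectation DD (\<lambda>G. TT z G * TT z' G) =
     \<pi>(a,z) * \<pi>(b,z) * \<pi>(c,z) * (\<pi>(a,z') * \<pi>(b,z') * \<pi>(c,z'))"
proof -
  have "measure_pmf.expectation DD (\<lambda>G. TT z G * TT z' G) = prod \<pi> {(a,z),(b,z),(c,z),(a,z'),(b,z'),(c,z')}"
      by (rule E_via) (use inI assms  in \<open>auto simp: fun_eq_iff TT3_def\<close>)
    also have "\<dots> = \<pi>(a,z) * \<pi>(b,z) * \<pi>(c,z) * (\<pi>(a,z') * \<pi>(b,z') * \<pi>(c,z'))" using ab ac bc assms  by (simp add: mult.assoc)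
    finally show ?thesis .
qed

lemma E_T1:
  assumes "z < n"
  shows "measure_pmf.expectation DD (TT z) = \<pi>(a,z) * \<pi>(b,z) * \<pi>(c,z)"
proof -
  have "measure_pmf.expectation DD (TT z) = prod \<pi> {(a,z),(b,z),(c,z)}"
      by (rule E_via) (use inI assms  in \<open>auto simp: fun_eq_iff TT3_def\<close>)
    also have "\<dots> = \<pi>(a,z) * \<pi>(b,z) * \<pi>(c,z)" using ab ac bc assms  by (simp add: mult.assoc)
    finally show ?thesis .
qed

lemma E_XYZ:
  assumes "z < n" "z' < n" "z'' < n" "z \<noteq> z'" "z \<noteq> z''" "z' \<noteq> z''"
  shows "measure_pmf.expectation DD (\<lambda>G. XX z G * YY z' G * ZZ z'' G) =
     \<pi>(a,z) * \<pi>(b,z) * (\<pi>(a,z') * \<pi>(c,z')) * (\<pi>(b,z'') * \<pi>(c,z''))"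
proof -
  have "measure_pmf.expectation DD (\<lambda>G. XX z G * YY z' G * ZZ z'' G) = prod \<pi> {(a,z),(b,z),(a,z'),(c,z'),(b,z''),(c,z'')}"
      by (rule E_via) (use inI assms  in \<open>auto simp: fun_eq_iff PP_def\<close>)
    also have "\<dots> = \<pi>(a,z) * \<pi>(b,z) * (\<pi>(a,z') * \<pi>(c,z')) * (\<pi>(b,z'') * \<pi>(c,z''))" using ab ac bc assms  by (simp add: mult.assoc)
    finally show ?thesis .
qed


lemma prob_E: "measure_pmf.prob DD {G. P G} = measure_pmf.expectation DD (\<lambda>G. of_bool (P G))"
proof -
  have "(\<lambda>G. of_bool (P G) :: real) = indicator {G. P G}" by (auto simp: fun_eq_iff indicator_def)
  then show ?thesis by simp
qed

lemma sum_if_eq: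
  fixes f :: "nat \<Rightarrow> real"
  assumes "finite A" "z \<in> A"
  shows "(\<Sum>z'\<in>A. if z = z' then u else f z') = u + (\<Sum>z'\<in>A. f z') - f z"
proof -
  have "(\<Sum>z'\<in>A. if z = z' then u else f z') = u + (\<Sum>z'\<in>A - {z}. if z = z' then u else f z')"
    using assms by (simp add: sum.remove)
  also have "(\<Sum>z'\<in>A - {z}. if z = z' then u else f z') = (\<Sum>z'\<in>A - {z}. f z')"
    by (intro sum.cong) auto
  also have "(\<Sum>z'\<in>A - {z}. f z') = (\<Sum>z'\<in>A. f z') - f z"
    using assms by (simp add: sum.remove)
  finally show ?thesis by simp
qed

lemma E_QR:
  "measure_pmf.expectation DD (\<lambda>G. SP a b n G * SP a c n G) =
     S3 \<pi> a b c n + S2 \<pi> a b n * S2 \<pi> a c n - (\<Sum>z<n. \<pi>(a,z) * \<pi>(b,z) * (\<pi>(a,z) * \<pi>(c,z)))"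
proof -
  have "(\<lambda>G. SP a b n G * SP a c n G) = (\<lambda>G. \<Sum>z<n. \<Sum>z'<n. XX z G * YY z' G)"
    by (simp add: fun_eq_iff SP_def sum_product)
  hence "measure_pmf.expectation DD (\<lambda>G. SP a b n G * SP a c n G) =
      (\<Sum>z<n. \<Sum>z'<n. measure_pmf.expectation DD (\<lambda>G. XX z G * YY z' G))"
    by simp
  also have "\<dots> = (\<Sum>z<n. \<Sum>z'<n. if z = z' then \<pi>(a,z) * \<pi>(b,z) * \<pi>(c,z) else \<pi>(a,z) * \<pi>(b,z) * (\<pi>(a,z') * \<pi>(c,z')))"
    by (intro sum.cong refl) (simp add: E_XY mult.assoc)
  also have "\<dots> = (\<Sum>z<n. \<pi>(a,z) * \<pi>(b,z) * \<pi>(c,z) + (\<Sum>z'<n. \<pi>(a,z) * \<pi>(b,z) * (\<pi>(a,z') * \<pi>(c,z')))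
          - \<pi>(a,z) * \<pi>(b,z) * (\<pi>(a,z) * \<pi>(c,z)))"
    by (intro sum.cong refl, subst sum_if_eq) auto
  also have "\<dots> = S3 \<pi> a b c n + S2 \<pi> a b n * S2 \<pi> a c n - (\<Sum>z<n. \<pi>(a,z) * \<pi>(b,z) * (\<pi>(a,z) * \<pi>(c,z)))"
    by (simp add: sum.distrib sum_subtractf S3_def S2_def sum_product)
  finally show ?thesis .
qed

lemma PP_sq: "PP x y z G * PP x y z G = PP x y z G"
  by (simp add: PP_def)

lemma SP_sq: "SP x y n G ^ 2 - SP x y n G = (\<Sum>z<n. \<Sum>z'\<in>{..<n} - {z}. PP x y z G * PP x y z' G)"
proof -
  have "SP x y n G ^ 2 = (\<Sum>z<n. \<Sum>z'<n. PP x y z G * PP x y z' G)"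
    by (simp add: power2_eq_square SP_def sum_product)
  also have "\<dots> = (\<Sum>z<n. PP x y z G + (\<Sum>z'\<in>{..<n} - {z}. PP x y z G * PP x y z' G))"
    by (intro sum.cong refl) (simp add: sum.remove PP_sq)
  finally show ?thesis by (simp add: sum.distrib SP_def)
qed


lemma E_QQR:
  "measure_pmf.expectation DD (\<lambda>G. (SP a b n G ^ 2 - SP a b n G) * SP a c n G)
     \<le> 2 * S3 \<pi> a b c n * S2 \<pi> a b n + S2 \<pi> a b n ^ 2 * S2 \<pi> a c n"
proof -
  define A where "A z = \<pi>(a,z) * \<pi>(b,z) * \<pi>(c,z)" for z
  define B where "B z = \<pi>(a,z) * \<pi>(b,z)" for z
  define C where "C z = \<pi>(a,z) * \<pi>(c,z)" for z
  define g where "g z z' z'' = (if z'' = z then A z * B z' else 0) + (if z'' = z' then B z * A z' else 0)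
        + B z * B z' * C z''" for z z' z''
  have nnA: "0 \<le> A z" "0 \<le> B z" "0 \<le> C z" if "z < n" for z
    using nn1[OF that] by (auto simp: A_def B_def C_def)
  have gnn: "0 \<le> g z z' z''" if "z < n" "z' < n" "z'' < n" for z z' z''
    using nnA that by (auto simp: g_def intro!: add_nonneg_nonneg mult_nonneg_nonneg)
  have "(\<lambda>G. (SP a b n G ^ 2 - SP a b n G) * SP a c n G) =
     (\<lambda>G. \<Sum>z<n. \<Sum>z'\<in>{..<n} - {z}. \<Sum>z''<n. XX z G * XX z' G * YY z'' G)"
    unfolding SP_sq SP_def[of a c] by (simp only: sum_distrib_right) (simp only: sum_distrib_left)
  hence "measure_pmf.expectation DD (\<lambda>G. (SP a b n G ^ 2 - SP a b n G) * SP a c n G) =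
     (\<Sum>z<n. \<Sum>z'\<in>{..<n} - {z}. \<Sum>z''<n. measure_pmf.expectation DD (\<lambda>G. XX z G * XX z' G * YY z'' G))"
    by simp
  also have "\<dots> \<le> (\<Sum>z<n. \<Sum>z'\<in>{..<n} - {z}. \<Sum>z''<n. g z z' z'')"
    unfolding g_def A_def B_def C_def
    by (intro sum_mono E_XXY) auto
  also have "\<dots> \<le> (\<Sum>z<n. \<Sum>z'<n. \<Sum>z''<n. g z z' z'')"
    by (intro sum_mono sum_mono2) (auto intro!: sum_nonneg gnn)
  also have "\<dots> = (\<Sum>z<n. \<Sum>z'<n. A z * B z' + B z * A z' + B z * B z' * S2 \<pi> a c n)"
    by (intro sum.cong refl) (simp add: g_def sum.distrib S2_def C_def sum_distrib_left)
  also have "\<dots> = sum A {..<n} * sum B {..<n} + sum B {..<n} * sum A {..<n} + sum B {..<n} * sum B {..<n} * S2 \<pi> a c n"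
  proof -
    have e1: "(\<Sum>z<n. \<Sum>z'<n. A z * B z') = sum A {..<n} * sum B {..<n}" by (simp add: sum_product)
    have e2: "(\<Sum>z<n. \<Sum>z'<n. B z * A z') = sum B {..<n} * sum A {..<n}" by (simp add: sum_product)
    have "sum B {..<n} * sum B {..<n} * S2 \<pi> a c n = (\<Sum>z<n. \<Sum>z'<n. B z * B z') * S2 \<pi> a c n"
      by (simp only: sum_product)
    also have "\<dots> = (\<Sum>z<n. (\<Sum>z'<n. B z * B z') * S2 \<pi> a c n)" by (rule sum_distrib_right)
    also have "\<dots> = (\<Sum>z<n. \<Sum>z'<n. B z * B z' * S2 \<pi> a c n)" by (simp only: sum_distrib_right)
    finally have e3: "(\<Sum>z<n. \<Sum>z'<n. B z * B z' * S2 \<pi> a c n) = sum B {..<n} * sum B {..<n} * S2 \<pi> a c n" ..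
    show ?thesis using e1 e2 e3 by (simp only: sum.distrib)
  qed
  also have "\<dots> = 2 * S3 \<pi> a b c n * S2 \<pi> a b n + S2 \<pi> a b n ^ 2 * S2 \<pi> a c n"
    by (simp add: S3_def S2_def A_def B_def power2_eq_square algebra_simps)
  finally show ?thesis .
qed

lemma TT_sq: "TT3 x y w z G * TT3 x y w z G = TT3 x y w z G"
  by (simp add: TT3_def)

lemma ST_sq: "ST x y w n G ^ 2 - ST x y w n G = (\<Sum>z<n. \<Sum>z'\<in>{..<n} - {z}. TT3 x y w z G * TT3 x y w z' G)"
proof -
  have "ST x y w n G ^ 2 = (\<Sum>z<n. \<Sum>z'<n. TT3 x y w z G * TT3 x y w z' G)"
    by (simp add: power2_eq_square ST_def sum_product)
  also have "\<dots> = (\<Sum>z<n. TT3 x y w z G + (\<Sum>z'\<in>{..<n} - {z}. TT3 x y w z G * TT3 x y w z' G))"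
    by (intro sum.cong refl) (simp add: sum.remove TT_sq)
  finally show ?thesis by (simp add: sum.distrib ST_def)
qed

lemma E_ST: "measure_pmf.expectation DD (ST a b c n) = S3 \<pi> a b c n"
proof -
  have "measure_pmf.expectation DD (ST a b c n) = (\<Sum>z<n. measure_pmf.expectation DD (TT z))"
    unfolding ST_def by simp
  also have "\<dots> = S3 \<pi> a b c n" by (simp add: E_T1 S3_def)
  finally show ?thesis .
qed

lemma E_ST2: "measure_pmf.expectation DD (\<lambda>G. ST a b c n G ^ 2 - ST a b c n G) \<le> S3 \<pi> a b c n ^ 2"
proof -
  define A where "A z = \<pi>(a,z) * \<pi>(b,z) * \<pi>(c,z)" for z
  have nnA: "0 \<le> A z" if "z < n" for z
    using nn1[OF that] by (auto simp: A_def)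
  have "measure_pmf.expectation DD (\<lambda>G. ST a b c n G ^ 2 - ST a b c n G) =
     (\<Sum>z<n. \<Sum>z'\<in>{..<n} - {z}. measure_pmf.expectation DD (\<lambda>G. TT z G * TT z' G))"
    unfolding ST_sq by simp
  also have "\<dots> = (\<Sum>z<n. \<Sum>z'\<in>{..<n} - {z}. A z * A z')"
    by (intro sum.cong refl) (simp add: E_TT A_def)
  also have "\<dots> \<le> (\<Sum>z<n. \<Sum>z'<n. A z * A z')"
    by (intro sum_mono sum_mono2) (auto intro!: mult_nonneg_nonneg nnA)
  also have "\<dots> = S3 \<pi> a b c n ^ 2"
    by (simp add: sum_product[symmetric] power2_eq_square S3_def A_def)
  finally show ?thesis .
qed

definition "VV G = (\<Sum>z<n. \<Sum>z'\<in>{..<n} - {z}. \<Sum>z''\<in>{..<n} - {z,z'}. XX z G * YY z' G * ZZ z'' G)"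

lemma E_VV: "measure_pmf.expectation DD VV \<le> S2 \<pi> a b n * S2 \<pi> a c n * S2 \<pi> b c n"
proof -
  define B where "B z = \<pi>(a,z) * \<pi>(b,z)" for z
  define C where "C z = \<pi>(a,z) * \<pi>(c,z)" for z
  define D where "D z = \<pi>(b,z) * \<pi>(c,z)" for z
  have nn: "0 \<le> B z" "0 \<le> C z" "0 \<le> D z" if "z < n" for z
    using nn1[OF that] by (auto simp: B_def C_def D_def)
  have "measure_pmf.expectation DD VV =
     (\<Sum>z<n. \<Sum>z'\<in>{..<n} - {z}. \<Sum>z''\<in>{..<n} - {z,z'}. measure_pmf.expectation DD (\<lambda>G. XX z G * YY z' G * ZZ z'' G))"
    unfolding VV_def by simp
  also have "\<dots> = (\<Sum>z<n. \<Sum>z'\<in>{..<n} - {z}. \<Sum>z''\<in>{..<n} - {z,z'}. B z * C z' * D z'')"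
    by (intro sum.cong refl) (auto simp: E_XYZ B_def C_def D_def)
  also have "\<dots> \<le> (\<Sum>z<n. \<Sum>z'\<in>{..<n} - {z}. \<Sum>z''<n. B z * C z' * D z'')"
    by (intro sum_mono sum_mono2) (auto intro!: mult_nonneg_nonneg nn)
  also have "\<dots> \<le> (\<Sum>z<n. \<Sum>z'<n. \<Sum>z''<n. B z * C z' * D z'')"
    by (intro sum_mono sum_mono2) (auto intro!: mult_nonneg_nonneg nn sum_nonneg)
  also have "\<dots> = S2 \<pi> a b n * S2 \<pi> a c n * S2 \<pi> b c n"
    by (simp add: sum_product[symmetric] sum_distrib_right[symmetric] S2_def B_def C_def D_def)
  finally show ?thesis .
qed

lemma SP_card: "SP x y n G = real (card ({..<n} \<inter> {z. G (x,z) \<and> G (y,z)}))"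
  by (simp add: SP_def PP_def)

lemma ST_card: "ST x y w n G = real (card ({..<n} \<inter> {z. G (x,z) \<and> G (y,z) \<and> G (w,z)}))"
  by (simp add: ST_def TT3_def)

lemma card_ge1_iff: "1 \<le> card ({..<n::nat} \<inter> {z. P z}) \<longleftrightarrow> (\<exists>z<n. P z)"
proof -
  have "1 \<le> card ({..<n::nat} \<inter> {z. P z}) \<longleftrightarrow> {..<n} \<inter> {z. P z} \<noteq> {}"
    by (simp add: Suc_le_eq card_gt_0_iff)
  also have "\<dots> \<longleftrightarrow> (\<exists>z<n. P z)" by auto
  finally show ?thesis .
qed

abbreviation "EvB \<equiv> EvB' a b c n"
abbreviation "EvA \<equiv> EvA' b c n"

lemma pw1: "of_bool (EvB G) \<le> SP a b n G * SP a c n G"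
proof (cases "EvB G")
  case True
  then have "1 \<le> card ({..<n} \<inter> {z. G (a,z) \<and> G (b,z)})" "1 \<le> card ({..<n} \<inter> {z. G (a,z) \<and> G (c,z)})"
    unfolding card_ge1_iff EvB'_def by auto
  then show ?thesis using True unfolding SP_card
    by (simp del: of_nat_mult add: of_nat_mult[symmetric])
next
  case False then show ?thesis by (simp add: SP_card)
qed

lemma pw2: "SP a b n G * SP a c n G - (SP a b n G ^ 2 - SP a b n G) * SP a c n G / 2
       - SP a b n G * (SP a c n G ^ 2 - SP a c n G) / 2 \<le> of_bool (EvB G)"
proof -
  have "EvB G \<longleftrightarrow> 1 \<le> card ({..<n} \<inter> {z. G (a,z) \<and> G (b,z)}) \<and> 1 \<le> card ({..<n} \<inter> {z. G (a,z) \<and> G (c,z)})"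
    unfolding card_ge1_iff EvB'_def by auto
  then show ?thesis unfolding SP_card by (simp only: nat_lower2)
qed

lemma pw3: "ST a b c n G - (ST a b c n G ^ 2 - ST a b c n G) / 2 \<le> of_bool (EvA G \<and> EvB G)"
proof -
  have "ST a b c n G - (ST a b c n G ^ 2 - ST a b c n G) / 2 \<le> of_bool (1 \<le> card ({..<n} \<inter> {z. G (a,z) \<and> G (b,z) \<and> G (c,z)}))"
    unfolding ST_card by (rule nat_lower1)
  also have "\<dots> \<le> of_bool (EvA G \<and> EvB G)"
    unfolding card_ge1_iff EvA'_def EvB'_def by auto
  finally show ?thesis .
qed

lemma VV_nonneg: "0 \<le> VV G"
  unfolding VV_def by (intro sum_nonneg) (auto simp: PP_def)

lemma pw4: "of_bool (EvA G \<and> EvB G) \<le> ST a b c n G + VV G"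
proof (cases "EvA G \<and> EvB G")
  case False
  have "0 \<le> ST a b c n G" by (simp add: ST_card)
  then show ?thesis using VV_nonneg[of G] False by auto
next
  case True
  show ?thesis
  proof (cases "\<exists>z<n. G (a,z) \<and> G (b,z) \<and> G (c,z)")
    case True
    then have "1 \<le> card ({..<n} \<inter> {z. G (a,z) \<and> G (b,z) \<and> G (c,z)})" unfolding card_ge1_iff .
    then have "1 \<le> ST a b c n G" unfolding ST_card by simp
    then show ?thesis using VV_nonneg[of G] by auto
  next
    case F: False
    from True obtain z1 z2 z3 where z: "z1 < n" "z2 < n" "z3 < n" "G (a,z1)" "G (b,z1)"
      "G (a,z2)" "G (c,z2)" "G (b,z3)" "G (c,z3)" unfolding EvA'_def EvB'_def by blast
    have d: "z1 \<noteq> z2" "z1 \<noteq> z3" "z2 \<noteq> z3" using F z by auto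
    have "1 = XX z1 G * YY z2 G * ZZ z3 G" using z by (simp add: PP_def)
    also have "\<dots> \<le> (\<Sum>z''\<in>{..<n} - {z1,z2}. XX z1 G * YY z2 G * ZZ z'' G)"
      by (rule member_le_sum) (use z d in \<open>auto simp: PP_def\<close>)
    also have "\<dots> \<le> (\<Sum>z'\<in>{..<n} - {z1}. \<Sum>z''\<in>{..<n} - {z1,z'}. XX z1 G * YY z' G * ZZ z'' G)"
      by (rule member_le_sum[where f = "\<lambda>z'. \<Sum>z''\<in>{..<n} - {z1,z'}. XX z1 G * YY z' G * ZZ z'' G"])
         (use z d in \<open>auto simp: PP_def intro!: sum_nonneg\<close>)
    also have "\<dots> \<le> VV G" unfolding VV_def
      by (rule member_le_sum[where f = "\<lambda>z. \<Sum>z'\<in>{..<n} - {z}. \<Sum>z''\<in>{..<n} - {z,z'}. XX z G * YY z' G * ZZ z'' G"])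
         (use z d in \<open>auto simp: PP_def intro!: sum_nonneg\<close>)
    finally have "1 \<le> VV G" .
    moreover have "0 \<le> ST a b c n G" by (simp add: ST_card)
    ultimately show ?thesis by auto
  qed
qed

lemma PB_upper: "measure_pmf.prob DD {G. EvB G} \<le> S3 \<pi> a b c n + S2 \<pi> a b n * S2 \<pi> a c n"
proof -
  have "measure_pmf.prob DD {G. EvB G} = measure_pmf.expectation DD (\<lambda>G. of_bool (EvB G))"
    by (rule prob_E)
  also have "\<dots> \<le> measure_pmf.expectation DD (\<lambda>G. SP a b n G * SP a c n G)"
    by (intro integral_mono pw1) auto
  also have "\<dots> \<le> S3 \<pi> a b c n + S2 \<pi> a b n * S2 \<pi> a c n"
    unfolding E_QR using nn1 by (auto intro!: sum_nonneg mult_nonneg_nonneg)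
  finally show ?thesis .
qed

lemma PB_lower_pre: "measure_pmf.prob DD {G. EvB G} \<ge>
   measure_pmf.expectation DD (\<lambda>G. SP a b n G * SP a c n G)
   - measure_pmf.expectation DD (\<lambda>G. (SP a b n G ^ 2 - SP a b n G) * SP a c n G) / 2
   - measure_pmf.expectation DD (\<lambda>G. (SP a c n G ^ 2 - SP a c n G) * SP a b n G) / 2"
proof -
  have "measure_pmf.expectation DD (\<lambda>G. SP a b n G * SP a c n G)
   - measure_pmf.expectation DD (\<lambda>G. (SP a b n G ^ 2 - SP a b n G) * SP a c n G) / 2
   - measure_pmf.expectation DD (\<lambda>G. (SP a c n G ^ 2 - SP a c n G) * SP a b n G) / 2
   = measure_pmf.expectation DD (\<lambda>G. SP a b n G * SP a c n G - (SP a b n G ^ 2 - SP a b n G) * SP a c n G / 2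
       - SP a b n G * (SP a c n G ^ 2 - SP a c n G) / 2)"
    by (simp add: mult.commute)
  also have "\<dots> \<le> measure_pmf.expectation DD (\<lambda>G. of_bool (EvB G))"
    by (intro integral_mono pw2) auto
  also have "\<dots> = measure_pmf.prob DD {G. EvB G}" by (rule prob_E[symmetric])
  finally show ?thesis .
qed

lemma PAB_lower: "measure_pmf.prob DD {G. EvA G \<and> EvB G} \<ge> S3 \<pi> a b c n - S3 \<pi> a b c n ^ 2 / 2"
proof -
  have "S3 \<pi> a b c n - S3 \<pi> a b c n ^ 2 / 2 \<le>
      measure_pmf.expectation DD (ST a b c n) - measure_pmf.expectation DD (\<lambda>G. ST a b c n G ^ 2 - ST a b c n G) / 2"
    using E_ST E_ST2 by simp
  also have "\<dots> = measure_pmf.expectation DD (\<lambda>G. ST a b c n G - (ST a b c n G ^ 2 - ST a b c n G) / 2)"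
    by simp
  also have "\<dots> \<le> measure_pmf.expectation DD (\<lambda>G. of_bool (EvA G \<and> EvB G))"
    by (intro integral_mono pw3) auto
  also have "\<dots> = measure_pmf.prob DD {G. EvA G \<and> EvB G}" by (rule prob_E[symmetric])
  finally show ?thesis .
qed

lemma PAB_upper: "measure_pmf.prob DD {G. EvA G \<and> EvB G} \<le>
    S3 \<pi> a b c n + S2 \<pi> a b n * S2 \<pi> a c n * S2 \<pi> b c n"
proof -
  have "measure_pmf.prob DD {G. EvA G \<and> EvB G} = measure_pmf.expectation DD (\<lambda>G. of_bool (EvA G \<and> EvB G))"
    by (rule prob_E)
  also have "\<dots> \<le> measure_pmf.expectation DD (\<lambda>G. ST a b c n G + VV G)"
    by (intro integral_mono pw4) auto
  also have "\<dots> = measure_pmf.expectation DD (ST a b c n) + measure_pmf.expectation DD VV"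
    by simp
  also have "\<dots> \<le> S3 \<pi> a b c n + S2 \<pi> a b n * S2 \<pi> a c n * S2 \<pi> b c n"
    using E_ST E_VV by simp
  finally show ?thesis .
qed

end

lemma core_ratio:
  fixes a b c n :: nat and e :: real
  assumes inI: "\<And>z. z < n \<Longrightarrow> (a,z) \<in> I \<and> (b,z) \<in> I \<and> (c,z) \<in> I"
    and ab: "a \<noteq> b" and ac: "a \<noteq> c" and bc: "b \<noteq> c"
    and pe: "\<And>z. z < n \<Longrightarrow> \<pi>(a,z) \<le> e"
    and s1: "S2 \<pi> a b n \<le> e" and s2: "S2 \<pi> a c n \<le> e" and s3: "S2 \<pi> b c n \<le> e"
    and e: "0 \<le> e" "e \<le> 1/6" and pos: "S3 \<pi> a b c n > 0"
  shows "\<bar>measure_pmf.prob DD {G. EvA' b c n G \<and> EvB' a b c n G} / measure_pmf.prob DD {G. EvB' a b c n G}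
          - S3 \<pi> a b c n / (S3 \<pi> a b c n + S2 \<pi> a b n * S2 \<pi> a c n)\<bar> \<le> 8 * e"
proof -
  have inI': "\<And>z. z < n \<Longrightarrow> (a,z) \<in> I \<and> (c,z) \<in> I \<and> (b,z) \<in> I" using inI by blast
  have nn: "0 \<le> \<pi>(a,z) \<and> 0 \<le> \<pi>(b,z) \<and> 0 \<le> \<pi>(c,z) \<and> \<pi>(a,z) \<le> 1 \<and> \<pi>(b,z) \<le> 1 \<and> \<pi>(c,z) \<le> 1" if "z < n" for z
    using nn1[where n=n, OF inI ab ac bc that] .
  have triv: "\<And>z. z < n \<Longrightarrow> z < n" by simp
  define S where "S = S3 \<pi> a b c n"
  define Sq where "Sq = S2 \<pi> a b n"
  define Sr where "Sr = S2 \<pi> a c n"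
  define Sqr where "Sqr = S2 \<pi> b c n"
  have Sqnn: "0 \<le> Sq" "0 \<le> Sr" "0 \<le> Sqr" "0 \<le> S"
    unfolding Sq_def Sr_def Sqr_def S_def S2_def S3_def using nn by (auto intro!: sum_nonneg)
  have SSq: "S \<le> Sq" unfolding S_def Sq_def S3_def S2_def
  proof (intro sum_mono)
    fix z assume "z \<in> {..<n}"
    then have z: "z < n" by simp
    show "\<pi>(a,z) * \<pi>(b,z) * \<pi>(c,z) \<le> \<pi>(a,z) * \<pi>(b,z)"
      using nn[OF z] by (intro mult_left_le) auto
  qed
  have S3swap: "S3 \<pi> a c b n = S" unfolding S_def S3_def by (simp add: mult_ac)
  have sumA: "(\<Sum>z<n. \<pi>(a,z) * \<pi>(b,z) * (\<pi>(a,z) * \<pi>(c,z))) \<le> e * S"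
  proof -
    have "(\<Sum>z<n. \<pi>(a,z) * \<pi>(b,z) * (\<pi>(a,z) * \<pi>(c,z))) \<le> (\<Sum>z<n. e * (\<pi>(a,z) * \<pi>(b,z) * \<pi>(c,z)))"
    proof (intro sum_mono)
      fix z assume "z \<in> {..<n}"
      hence z: "z < n" by simp
      have "\<pi>(a,z) * (\<pi>(a,z) * \<pi>(b,z) * \<pi>(c,z)) \<le> e * (\<pi>(a,z) * \<pi>(b,z) * \<pi>(c,z))"
        by (intro mult_right_mono pe z) (use nn[OF z] in simp)
      then show "\<pi>(a,z) * \<pi>(b,z) * (\<pi>(a,z) * \<pi>(c,z)) \<le> e * (\<pi>(a,z) * \<pi>(b,z) * \<pi>(c,z))"
        by (simp add: mult_ac)
    qed
    also have "\<dots> = e * S" by (simp add: S_def S3_def sum_distrib_left)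
    finally show ?thesis .
  qed
  have EQR: "measure_pmf.expectation DD (\<lambda>G. SP a b n G * SP a c n G) \<ge> S + Sq * Sr - e * S"
    using E_QR[where n=n, OF inI ab ac bc] sumA unfolding S_def Sq_def Sr_def by linarith
  have E1: "measure_pmf.expectation DD (\<lambda>G. (SP a b n G ^ 2 - SP a b n G) * SP a c n G) \<le> 2 * S * Sq + Sq^2 * Sr"
    using E_QQR[where n=n, OF inI ab ac bc] unfolding S_def Sq_def Sr_def .
  have E2: "measure_pmf.expectation DD (\<lambda>G. (SP a c n G ^ 2 - SP a c n G) * SP a b n G) \<le> 2 * S * Sr + Sr^2 * Sq"
    using E_QQR[where n=n and b=c and c=b, OF inI' ac ab bc[symmetric]] S3swap unfolding Sq_def Sr_def by simp
  have PBlo: "measure_pmf.prob DD {G. EvB' a b c n G} \<ge> S + Sq * Sr - e * S - (2 * S * Sq + Sq^2 * Sr) / 2 - (2 * S * Sr + Sr^2 * Sq) / 2"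
  proof -
    have "measure_pmf.expectation DD (\<lambda>G. SP a b n G * SP a c n G)
     - measure_pmf.expectation DD (\<lambda>G. (SP a b n G ^ 2 - SP a b n G) * SP a c n G) / 2
     - measure_pmf.expectation DD (\<lambda>G. (SP a c n G ^ 2 - SP a c n G) * SP a b n G) / 2
     \<le> measure_pmf.prob DD {G. EvB' a b c n G}"
      by (rule PB_lower_pre) (use inI ab ac bc in auto)
    moreover have "S + Sq * Sr - e * S - (2 * S * Sq + Sq^2 * Sr) / 2 - (2 * S * Sr + Sr^2 * Sq) / 2 \<le>
      measure_pmf.expectation DD (\<lambda>G. SP a b n G * SP a c n G)
     - measure_pmf.expectation DD (\<lambda>G. (SP a b n G ^ 2 - SP a b n G) * SP a c n G) / 2
     - measure_pmf.expectation DD (\<lambda>G. (SP a c n G ^ 2 - SP a c n G) * SP a b n G) / 2"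
      using EQR E1 E2 by argo
    ultimately show ?thesis by linarith
  qed
  have PBlo2: "(S + Sq * Sr) * (1 - 3 * e) \<le> measure_pmf.prob DD {G. EvB' a b c n G}"
    by (rule lower_arith[OF PBlo Sqnn(4) Sqnn(1) Sqnn(2)]) (use s1 s2 in \<open>simp_all add: Sq_def Sr_def\<close>)
  have PBup: "measure_pmf.prob DD {G. EvB' a b c n G} \<le> S + Sq * Sr"
    using PB_upper[where n=n, OF inI ab ac bc] unfolding S_def Sq_def Sr_def .
  have PAlo: "S * (1 - e) \<le> measure_pmf.prob DD {G. EvA' b c n G \<and> EvB' a b c n G}"
  proof -
    have h: "S * S \<le> S * e" using SSq s1 Sqnn unfolding Sq_def by (intro mult_left_mono) auto
    have h2: "S - S ^ 2 / 2 \<le> measure_pmf.prob DD {G. EvA' b c n G \<and> EvB' a b c n G}"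
      using PAB_lower[where n=n, OF inI ab ac bc] unfolding S_def .
    have h3: "S * (1 - e) = S - S * e" by (simp add: algebra_simps)
    have h4: "S ^ 2 = S * S" by (simp add: power2_eq_square)
    have h5: "0 \<le> S * S" by simp
    show ?thesis using h h2[unfolded h4] h3 h5 by argo
  qed
  have PAup: "measure_pmf.prob DD {G. EvA' b c n G \<and> EvB' a b c n G} \<le> S + e * (S + Sq * Sr)"
  proof -
    have h: "Sq * Sr * Sqr \<le> Sq * Sr * e" using Sqnn s3 unfolding Sqr_def by (intro mult_left_mono) auto
    have h0: "0 \<le> e * S" using e Sqnn by simp
    have h2: "measure_pmf.prob DD {G. EvA' b c n G \<and> EvB' a b c n G} \<le> S + Sq * Sr * Sqr"
      using PAB_upper[where n=n, OF inI ab ac bc] unfolding S_def Sq_def Sr_def Sqr_def .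
    have h3: "S + e * (S + Sq * Sr) = S + e * S + Sq * Sr * e" by (simp add: algebra_simps)
    show ?thesis using h h0 h2 h3 by argo
  qed
  have Dpos: "S + Sq * Sr > 0" using pos Sqnn unfolding S_def by (simp add: add_pos_nonneg)
  have SD: "S \<le> S + Sq * Sr" using Sqnn by simp
  show ?thesis unfolding S_def[symmetric] Sq_def[symmetric] Sr_def[symmetric]
    by (rule ratio_arith[OF Dpos Sqnn(4) SD e(1) e(2) PBup PBlo2 PAlo PAup])
qed

end



lemma per_m:
  fixes nL n :: nat and wL wR :: "nat \<Rightarrow> real" and u u1 u2 :: nat and W C1 C2 \<nu> e :: real
  assumes n1: "1 \<le> n"
    and wL_pos: "\<And>i. i < nL \<Longrightarrow> wL i > 0"
    and wR_pos: "\<And>j. j < n \<Longrightarrow> wR j > 0"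
    and assm1: "\<And>i j. i < nL \<Longrightarrow> j < n \<Longrightarrow> wL i * wR j / (real n * moment n wR 1) \<le> 1"
    and nodes: "u < nL" "u1 < nL" "u2 < nL"
    and dist: "u \<noteq> u1" "u \<noteq> u2" "u1 \<noteq> u2"
    and WL: "\<And>i. i < nL \<Longrightarrow> wL i \<le> W" and WR: "\<And>j. j < n \<Longrightarrow> wR j \<le> W"
    and W2: "W ^ 2 \<le> C1 * real n * \<nu> ^ 2" and C1: "0 \<le> C1"
    and M2: "moment n wR 2 \<le> C2 * (moment n wR 1) ^ 2" and C2: "0 \<le> C2"
    and \<nu>: "0 \<le> \<nu>" "\<nu> \<le> 1"
    and e_def: "e = (C1 * C2 + 1) * \<nu>" and e6: "e \<le> 1/6"
  shows "\<bar>cprob (bip_graph nL n wL wR)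
                 (\<lambda>Gb. proj_edge n Gb u1 u2)
                 (\<lambda>Gb. proj_edge n Gb u u1 \<and> proj_edge n Gb u u2)
             - 1 / (1 + (moment n wR 2)\<^sup>2
                       / (moment n wR 3 * moment n wR 1) * wL u)\<bar> \<le> 8 * e"
proof -
  define K where "K = (\<Sum>j<n. wR j)"
  define A2 where "A2 = (\<Sum>j<n. wR j ^ 2)"
  define A3 where "A3 = (\<Sum>j<n. wR j ^ 3)"
  have npos: "real n > 0" using n1 by simp
  have Kpos: "K > 0" unfolding K_def using n1 wR_pos by (intro sum_pos) (auto simp: lessThan_empty_iff dest!: wR_pos)
  have A2pos: "A2 > 0" unfolding A2_def using n1 wR_pos by (intro sum_pos) (auto simp: lessThan_empty_iff dest!: wR_pos)
  have A3pos: "A3 > 0" unfolding A3_def using n1 wR_pos by (intro sum_pos) (auto simp: lessThan_empty_iff dest!: wR_pos)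
  have M1: "moment n wR 1 = K / n" by (simp add: moment_def K_def)
  have M2e: "moment n wR 2 = A2 / n" by (simp add: moment_def A2_def)
  have M3e: "moment n wR 3 = A3 / n" by (simp add: moment_def A3_def)
  have nM1: "real n * moment n wR 1 = K" unfolding M1 using npos by simp
  define \<pi> where "\<pi> = (\<lambda>x. edge_prob n wL wR (fst x) (snd x))"
  define I where "I = {..<nL} \<times> {..<n}"
  have \<pi>val: "\<pi> (i,j) = wL i * wR j / K" if "i < nL" "j < n" for i j
    using assm1[OF that] unfolding \<pi>_def edge_prob_def fst_conv snd_conv nM1 by simp
  have finI: "finite I" by (simp add: I_def)
  have \<pi>01: "0 \<le> \<pi> x \<and> \<pi> x \<le> 1" if xI: "x \<in> I" for x
  proof -
    obtain i j where x: "x = (i,j)" "i < nL" "j < n" using xI unfolding I_def by blast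
    show ?thesis using \<pi>val[OF x(2,3)] assm1[OF x(2,3)] wL_pos[OF x(2)] wR_pos[OF x(3)] Kpos
      unfolding x(1) nM1 by simp
  qed
  have inI: "\<And>z. z < n \<Longrightarrow> (u,z) \<in> I \<and> (u1,z) \<in> I \<and> (u2,z) \<in> I"
    using nodes by (auto simp: I_def)
  have S2e: "S2 \<pi> x y n = wL x * wL y * A2 / K ^ 2" if "x < nL" "y < nL" for x y
  proof -
    have "S2 \<pi> x y n = (\<Sum>j<n. (wL x * wL y / K ^ 2) * wR j ^ 2)"
      unfolding S2_def by (intro sum.cong refl) (simp add: \<pi>val that power2_eq_square)
    also have "\<dots> = wL x * wL y * A2 / K ^ 2" by (simp add: A2_def sum_distrib_left sum_divide_distrib)
    finally show ?thesis .
  qed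
  have S3e: "S3 \<pi> x y w n = wL x * wL y * wL w * A3 / K ^ 3" if "x < nL" "y < nL" "w < nL" for x y w
  proof -
    have "S3 \<pi> x y w n = (\<Sum>j<n. (wL x * wL y * wL w / K ^ 3) * wR j ^ 3)"
      unfolding S3_def by (intro sum.cong refl) (simp add: \<pi>val that power3_eq_cube)
    also have "\<dots> = wL x * wL y * wL w * A3 / K ^ 3" by (simp add: A3_def sum_distrib_left sum_divide_distrib)
    finally show ?thesis .
  qed
  define Q where "Q = W ^ 2 * A2 / K ^ 2"
  have A2le: "A2 \<le> C2 * K ^ 2 / n"
  proof -
    have "A2 / n \<le> C2 * (K / n) ^ 2" using M2 unfolding M2e M1 .
    hence "A2 \<le> n * (C2 * (K / n) ^ 2)" using npos by (simp add: field_simps)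
    also have "\<dots> = C2 * K ^ 2 / n" using npos by (simp add: field_simps power2_eq_square)
    finally show ?thesis .
  qed
  have Qle: "Q \<le> C1 * C2 * \<nu> ^ 2"
  proof -
    have "Q \<le> (C1 * real n * \<nu> ^ 2) * (C2 * K ^ 2 / n) / K ^ 2"
      unfolding Q_def using W2 A2le A2pos Kpos C1
      by (intro divide_right_mono mult_mono) auto
    also have "\<dots> = C1 * C2 * \<nu> ^ 2" using npos Kpos by (simp add: field_simps)
    finally show ?thesis .
  qed
  have Wnn: "0 \<le> W" using WL[OF nodes(1)] wL_pos[OF nodes(1)] by simp
  have eQ: "C1 * C2 * \<nu> ^ 2 \<le> e" unfolding e_def
  proof -
    have "C1 * C2 * \<nu> ^ 2 \<le> C1 * C2 * \<nu>"
      using \<nu> C1 C2 by (intro mult_left_mono) (auto simp: power2_eq_square intro: mult_left_le)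
    also have "\<dots> \<le> (C1 * C2 + 1) * \<nu>" using \<nu> by (simp add: algebra_simps)
    finally show "C1 * C2 * \<nu> ^ 2 \<le> (C1 * C2 + 1) * \<nu>" .
  qed
  have e0: "0 \<le> e" using e_def C1 C2 \<nu> by simp
  have S2le: "S2 \<pi> x y n \<le> e" if "x < nL" "y < nL" for x y
  proof -
    have "wL x * wL y \<le> W ^ 2" unfolding power2_eq_square
      using WL[OF that(1)] WL[OF that(2)] wL_pos[OF that(1)] wL_pos[OF that(2)] by (intro mult_mono) auto
    hence "S2 \<pi> x y n \<le> Q" unfolding S2e[OF that] Q_def using A2pos Kpos
      by (intro divide_right_mono mult_right_mono) auto
    then show ?thesis using Qle eQ by linarith
  qed
  have pie: "\<pi>(u,z) \<le> e" if "z < n" for z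
  proof -
    have "wR z ^ 2 \<le> A2" unfolding A2_def
      by (rule member_le_sum[where f = "\<lambda>j. wR j ^ 2"]) (use that in auto)
    moreover have "wL u ^ 2 \<le> W ^ 2" using WL[OF nodes(1)] wL_pos[OF nodes(1)] by (intro power_mono) auto
    ultimately have "(wL u * wR z) ^ 2 \<le> W ^ 2 * A2"
      unfolding power_mult_distrib by (intro mult_mono) auto
    hence "\<pi>(u,z) ^ 2 \<le> Q" unfolding \<pi>val[OF nodes(1) that] Q_def power_divide using Kpos
      by (intro divide_right_mono) auto
    also have "\<dots> \<le> C1 * C2 * \<nu> ^ 2" by (rule Qle)
    also have "\<dots> \<le> e ^ 2"
    proof -
      have "C1 * C2 \<le> (C1 * C2 + 1) ^ 2" using C1 C2 by (simp add: power2_eq_square algebra_simps)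
      hence "C1 * C2 * \<nu> ^ 2 \<le> (C1 * C2 + 1) ^ 2 * \<nu> ^ 2" by (intro mult_right_mono) auto
      then show ?thesis unfolding e_def by (simp add: power_mult_distrib)
    qed
    finally show ?thesis using e0 by (rule power2_le_imp_le)
  qed
  have wpos: "wL u > 0" "wL u1 > 0" "wL u2 > 0" using wL_pos nodes by auto
  have S3pos: "S3 \<pi> u u1 u2 n > 0" unfolding S3e[OF nodes] using wpos A3pos Kpos by simp
  have core: "\<bar>measure_pmf.prob (Pi_pmf I False (\<lambda>x. bernoulli_pmf (\<pi> x))) {G. EvA' u1 u2 n G \<and> EvB' u u1 u2 n G}
        / measure_pmf.prob (Pi_pmf I False (\<lambda>x. bernoulli_pmf (\<pi> x))) {G. EvB' u u1 u2 n G}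
       - S3 \<pi> u u1 u2 n / (S3 \<pi> u u1 u2 n + S2 \<pi> u u1 n * S2 \<pi> u u2 n)\<bar> \<le> 8 * e"
    by (rule core_ratio[OF finI]) (use \<pi>01 inI dist pie S2le nodes e0 e6 S3pos in auto)
  have bg: "bip_graph nL n wL wR = Pi_pmf I False (\<lambda>x. bernoulli_pmf (\<pi> x))"
  proof -
    have "(\<lambda>(u,v). bernoulli_pmf (edge_prob n wL wR u v)) = (\<lambda>x. bernoulli_pmf (\<pi> x))"
      by (auto simp: fun_eq_iff \<pi>_def)
    then show ?thesis unfolding bip_graph_def I_def by simp
  qed
  have evAB: "{Gb. proj_edge n Gb u1 u2 \<and> proj_edge n Gb u u1 \<and> proj_edge n Gb u u2} =
      {G. EvA' u1 u2 n G \<and> EvB' u u1 u2 n G}"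
    using dist unfolding EvA'_def EvB'_def proj_edge_def by auto
  have evB: "{Gb. proj_edge n Gb u u1 \<and> proj_edge n Gb u u2} = {G. EvB' u u1 u2 n G}"
    using dist unfolding EvB'_def proj_edge_def by auto
  have p1: "A3 * K + A2 * (A2 * wL u) \<noteq> 0" using wpos A2pos A3pos Kpos
    by (intro order.strict_implies_not_eq[symmetric] add_pos_pos mult_pos_pos) auto
  have p2: "A3 * (K * (wL u * (wL u1 * wL u2))) + A2 * (A2 * (wL u * (wL u * (wL u1 * wL u2)))) \<noteq> 0"
    using wpos A2pos A3pos Kpos
    by (intro order.strict_implies_not_eq[symmetric] add_pos_pos mult_pos_pos) auto
  have teq: "1 / (1 + (moment n wR 2)\<^sup>2 / (moment n wR 3 * moment n wR 1) * wL u) =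
       S3 \<pi> u u1 u2 n / (S3 \<pi> u u1 u2 n + S2 \<pi> u u1 n * S2 \<pi> u u2 n)"
    unfolding S3e[OF nodes] S2e[OF nodes(1,2)] S2e[OF nodes(1,3)] M2e M3e M1
    using wpos A2pos A3pos Kpos npos
    apply (simp add: field_simps power2_eq_square power3_eq_cube)
    apply (subst frac_eq_eq)
    using p1 p2 apply (simp, simp)
    apply (simp add: algebra_simps)
    done
  show ?thesis unfolding cprob_def bg evAB evB teq using core .
qed

theorem mainTheorem9:
  fixes nL nR :: "nat \<Rightarrow> nat"
    and wL wR :: "nat \<Rightarrow> nat \<Rightarrow> real"
    and u u1 u2 :: "nat \<Rightarrow> nat"
    and \<delta> :: real
  assumes nL_lim: "filterlim nL at_top sequentially"
    and nR_lim: "filterlim nR at_top sequentially"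
    and wL_pos: "\<And>m i. i < nL m \<Longrightarrow> wL m i > 0"
    and wR_pos: "\<And>m j. j < nR m \<Longrightarrow> wR m j > 0"
    and assm1: "\<And>m i j. i < nL m \<Longrightarrow> j < nR m \<Longrightarrow>
                   wL m i * wR m j / (real (nR m) * moment (nR m) (wR m) 1) \<le> 1"
    and delta: "\<delta> > 1/10"
    and max_bound: "(\<lambda>m. Max (wL m ` {..<nL m} \<union> wR m ` {..<nR m}))
                      \<in> O(\<lambda>m. real (nR m) powr (1/2 - \<delta>))"
    and min_bound: "(\<lambda>m. Min (wL m ` {..<nL m})) \<in> \<Omega>(\<lambda>m. 1)"
    and MR2_bound: "(\<lambda>m. moment (nR m) (wR m) 2) \<in> O(\<lambda>m. (moment (nR m) (wR m) 1)\<^sup>2)"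
    and MR4_bound: "(\<lambda>m. moment (nR m) (wR m) 4) \<in> O(\<lambda>m. real (nR m) powr (1 - 2 * \<delta>))"
    and nodes: "\<And>m. u m < nL m \<and> u1 m < nL m \<and> u2 m < nL m"
    and distinct: "\<And>m. u m \<noteq> u1 m \<and> u m \<noteq> u2 m \<and> u1 m \<noteq> u2 m"
  shows "(\<lambda>m. cprob (bip_graph (nL m) (nR m) (wL m) (wR m))
                 (\<lambda>Gb. proj_edge (nR m) Gb (u1 m) (u2 m))
                 (\<lambda>Gb. proj_edge (nR m) Gb (u m) (u1 m) \<and> proj_edge (nR m) Gb (u m) (u2 m))
             - 1 / (1 + (moment (nR m) (wR m) 2)\<^sup>2
                       / (moment (nR m) (wR m) 3 * moment (nR m) (wR m) 1) * wL m (u m)))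
          \<longlonglongrightarrow> 0"
  proof -
  from max_bound obtain c1 where c1: "c1 > 0"
    "eventually (\<lambda>m. norm (Max (wL m ` {..<nL m} \<union> wR m ` {..<nR m})) \<le> c1 * norm (real (nR m) powr (1/2 - \<delta>))) sequentially"
    by (elim landau_o.bigE)
  from MR2_bound obtain c2 where c2: "c2 > 0"
    "eventually (\<lambda>m. norm (moment (nR m) (wR m) 2) \<le> c2 * norm ((moment (nR m) (wR m) 1)\<^sup>2)) sequentially"
    by (elim landau_o.bigE)
  have n1: "eventually (\<lambda>m. 1 \<le> nR m) sequentially"
    using nR_lim by (simp add: filterlim_at_top)
  define \<nu> where "\<nu> m = real (nR m) powr (- \<delta>)" for m
  define e where "e m = (c1\<^sup>2 * c2 + 1) * \<nu> m" for m
  have rlim: "filterlim (\<lambda>m. real (nR m)) at_top sequentially"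
    by (rule filterlim_compose[OF filterlim_real_sequentially nR_lim])
  have \<nu>lim: "\<nu> \<longlonglongrightarrow> 0" unfolding \<nu>_def
    by (rule tendsto_neg_powr[OF _ rlim]) (use delta in simp)
  have elim: "e \<longlonglongrightarrow> 0" unfolding e_def
    using tendsto_mult_right_zero[OF \<nu>lim] by simp
  have e6: "eventually (\<lambda>m. e m \<le> 1/6) sequentially"
    using order_tendstoD(2)[OF elim, of "1/6"] by (auto elim: eventually_mono)
  have ev: "eventually (\<lambda>m. \<bar>cprob (bip_graph (nL m) (nR m) (wL m) (wR m))
                 (\<lambda>Gb. proj_edge (nR m) Gb (u1 m) (u2 m))
                 (\<lambda>Gb. proj_edge (nR m) Gb (u m) (u1 m) \<and> proj_edge (nR m) Gb (u m) (u2 m))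
             - 1 / (1 + (moment (nR m) (wR m) 2)\<^sup>2
                       / (moment (nR m) (wR m) 3 * moment (nR m) (wR m) 1) * wL m (u m))\<bar> \<le> 8 * e m) sequentially"
    using c1(2) c2(2) n1 e6
  proof eventually_elim
    case (elim m)
    define W where "W = Max (wL m ` {..<nL m} \<union> wR m ` {..<nR m})"
    have fin: "finite (wL m ` {..<nL m} \<union> wR m ` {..<nR m})" by simp
    have WL: "wL m i \<le> W" if "i < nL m" for i
      unfolding W_def by (rule Max_ge[OF fin]) (use that in auto)
    have WR: "wR m j \<le> W" if "j < nR m" for j
      unfolding W_def by (rule Max_ge[OF fin]) (use that in auto)
    have Wpos: "0 < W" using WL[of "u m"] nodes[of m] wL_pos[of "u m" m] by auto
    have npos: "0 < real (nR m)" using elim(3) by simp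
    have Wb: "W \<le> c1 * real (nR m) powr (1/2 - \<delta>)"
      using elim(1) Wpos unfolding W_def[symmetric] by simp
    have "W ^ 2 \<le> (c1 * real (nR m) powr (1/2 - \<delta>)) ^ 2"
      using Wb Wpos by (intro power_mono) auto
    also have "\<dots> = c1\<^sup>2 * (real (nR m) powr (1/2 - \<delta>) * real (nR m) powr (1/2 - \<delta>))"
      by (simp add: power2_eq_square)
    also have "real (nR m) powr (1/2 - \<delta>) * real (nR m) powr (1/2 - \<delta>) = real (nR m) * \<nu> m ^ 2"
    proof -
      have "real (nR m) powr (1/2 - \<delta>) * real (nR m) powr (1/2 - \<delta>) = real (nR m) powr (1 + (- \<delta>) + (- \<delta>))"
        by (simp add: powr_add[symmetric])
      also have "\<dots> = real (nR m) powr 1 * real (nR m) powr (- \<delta>) * real (nR m) powr (- \<delta>)"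
        by (simp only: powr_add)
      also have "\<dots> = real (nR m) * \<nu> m ^ 2"
        using npos by (simp add: \<nu>_def power2_eq_square)
      finally show ?thesis .
    qed
    finally have W2: "W ^ 2 \<le> c1\<^sup>2 * real (nR m) * \<nu> m ^ 2" by (simp add: mult.assoc)
    have M2: "moment (nR m) (wR m) 2 \<le> c2 * (moment (nR m) (wR m) 1)\<^sup>2"
      using elim(2) by simp
    have \<nu>1: "0 \<le> \<nu> m" "\<nu> m \<le> 1"
    proof -
      show "0 \<le> \<nu> m" by (simp add: \<nu>_def)
      have "real (nR m) powr (- \<delta>) \<le> 1 powr (- \<delta>)"
        by (rule powr_mono2') (use delta elim(3) in auto)
      then show "\<nu> m \<le> 1" by (simp add: \<nu>_def)
    qed
    show ?case
      by (rule per_m[OF elim(3) wL_pos wR_pos assm1 _ _ _ _ _ _ WL WR W2 _ M2 _ \<nu>1 e_def elim(4)])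
         (use nodes[of m] distinct[of m] c2 in auto)
  qed
  have g8: "(\<lambda>m. 8 * e m) \<longlonglongrightarrow> 0"
    using tendsto_mult_right_zero[OF elim] by simp
  show ?thesis
    by (rule Lim_null_comparison[OF _ g8]) (use ev in \<open>simp only: real_norm_def\<close>)
qed


end
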